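(* Let $G$ be a finite simple graph with $n$ vertices and minimum degree $\delta \ge 10^6$. Then $$\gamma_s(G) \le \frac{\sqrt{6\ln(\delta+1)} + 1.21}{\sqrt{\delta+1}}\, n.$$
   Context: For a vertex $v$ of $G$, $N[v]$ denotes the closed neighbourhood of $v$ (i.e. $v$ together with its neighbours). A signed domination function of $G$ is a function $f: V(G) \to \{-1, 1\}$ such that $\sum_{x \in N[v]} f(x) \ge 1$ for every vertex $v \in V(G)$. The weight of $f$ is $f(V(G)) = \sum_{v \in V(G)} f(v)$. The signed domination number $\gamma_s(G)$ is the minimum weight of a signed domination function of $G$. *)

theory Defs
  imports Complex_Main
begin

definition simple_graph :: "'a set \<Rightarrow> ('a \<Rightarrow> 'a \<Rightarrow> bool) \<Rightarrow> bool" where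
  "simple_graph V E \<longleftrightarrow> finite V \<and> (\<forall>u v. E u v \<longrightarrow> u \<in> V \<and> v \<in> V)
     \<and> (\<forall>u v. E u v \<longrightarrow> E v u) \<and> (\<forall>v. \<not> E v v)"

definition neighbours :: "'a set \<Rightarrow> ('a \<Rightarrow> 'a \<Rightarrow> bool) \<Rightarrow> 'a \<Rightarrow> 'a set" where
  "neighbours V E v = {u \<in> V. E v u}"

definition closed_nbhd :: "'a set \<Rightarrow> ('a \<Rightarrow> 'a \<Rightarrow> bool) \<Rightarrow> 'a \<Rightarrow> 'a set" where
  "closed_nbhd V E v = insert v (neighbours V E v)"

definition degree :: "'a set \<Rightarrow> ('a \<Rightarrow> 'a \<Rightarrow> bool) \<Rightarrow> 'a \<Rightarrow> nat" where
  "degree V E v = card (neighbours V E v)"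

definition min_degree :: "'a set \<Rightarrow> ('a \<Rightarrow> 'a \<Rightarrow> bool) \<Rightarrow> nat" where
  "min_degree V E = Min (degree V E ` V)"

definition signed_dom_fun :: "'a set \<Rightarrow> ('a \<Rightarrow> 'a \<Rightarrow> bool) \<Rightarrow> ('a \<Rightarrow> int) \<Rightarrow> bool" where
  "signed_dom_fun V E f \<longleftrightarrow> (\<forall>v\<in>V. f v \<in> {-1, 1})
     \<and> (\<forall>v\<in>V. (\<Sum>x\<in>closed_nbhd V E v. f x) \<ge> 1)"

definition signed_dom_number :: "'a set \<Rightarrow> ('a \<Rightarrow> 'a \<Rightarrow> bool) \<Rightarrow> int" where
  "signed_dom_number V E = Min {(\<Sum>v\<in>V. f v) | f. signed_dom_fun V E f}"

end

theory Submission imports Defs "HOL-Probability.Probability" begin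


definition xi :: "bool \<Rightarrow> int" where "xi b = (if b then 1 else -1)"

lemma prob_bad:
  fixes V :: "'a set" and I :: "'a set" and \<epsilon> :: real
  assumes fin: "finite V" and IV: "I \<subseteq> V" and Ine: "I \<noteq> {}"
    and e0: "0 \<le> \<epsilon>" and e1: "\<epsilon> \<le> 1/2"
  shows "measure_pmf.prob (Pi_pmf V False (\<lambda>_. bernoulli_pmf (1/2+\<epsilon>)))
           {\<omega>. (\<Sum>i\<in>I. real_of_int (xi (\<omega> i))) \<le> 0} \<le> exp (-2 * \<epsilon>^2 * card I)"
proof -
  define xv where "xv = (\<lambda>b. real_of_int (xi b))"
  define P where "P = Pi_pmf V False (\<lambda>_. bernoulli_pmf (1/2+\<epsilon>))"
  have finI: "finite I" using fin IV finite_subset by blast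
  have ind0: "prob_space.indep_vars (measure_pmf P) (\<lambda>_. count_space UNIV) (\<lambda>x f. f x) V"
    unfolding P_def by (rule indep_vars_Pi_pmf[OF fin])
  have ind1: "prob_space.indep_vars (measure_pmf P) (\<lambda>_. count_space UNIV) (\<lambda>x f. f x) I"
    by (rule prob_space.indep_vars_subset[OF measure_pmf.prob_space_axioms ind0 IV])
  have ind: "prob_space.indep_vars (measure_pmf P) (\<lambda>_. borel) (\<lambda>i f. xv (f i)) I"
    using prob_space.indep_vars_compose2[OF measure_pmf.prob_space_axioms ind1, of "\<lambda>_. xv" "\<lambda>_. borel"]
    by simp
  have ex: "measure_pmf.expectation P (\<lambda>f. xv (f i)) = 2*\<epsilon>" if "i \<in> I" for i
  proof -
    have "i \<in> V" using that IV by auto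
    hence "map_pmf (\<lambda>f. f i) P = bernoulli_pmf (1/2+\<epsilon>)"
      unfolding P_def by (subst Pi_pmf_component) (use fin in auto)
    hence "measure_pmf.expectation P (\<lambda>f. xv (f i)) = measure_pmf.expectation (bernoulli_pmf (1/2+\<epsilon>)) xv"
      by (metis integral_map_pmf)
    also have "\<dots> = 2*\<epsilon>" using e0 e1 by (simp add: xv_def xi_def)
    finally show ?thesis .
  qed
  interpret H: Hoeffding_ineq "measure_pmf P" I "\<lambda>i f. xv (f i)" "\<lambda>_. -1" "\<lambda>_. 1"
     "\<Sum>i\<in>I. measure_pmf.expectation P (\<lambda>f. xv (f i))"
    by unfold_locales (simp_all add: finI ind, auto simp: xv_def xi_def)
  have mu: "(\<Sum>i\<in>I. measure_pmf.expectation P (\<lambda>f. xv (f i))) = 2*\<epsilon>*card I"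
    using ex by simp
  have "measure_pmf.prob P {x\<in>space (measure_pmf P). (\<Sum>i\<in>I. xv (x i)) \<le> (\<Sum>i\<in>I. measure_pmf.expectation P (\<lambda>f. xv (f i))) - 2*\<epsilon>*card I}
     \<le> exp (-2 * (2*\<epsilon>*card I)\<^sup>2 / (\<Sum>i\<in>I. (1 - (-1::real))\<^sup>2))"
    by (rule H.Hoeffding_ineq_le) (use e0 finI Ine in auto)
  also have "(\<Sum>i\<in>I. (1 - (-1::real))\<^sup>2) = 4 * card I" by simp
  also have "-2 * (2*\<epsilon>*card I)\<^sup>2 / (4 * card I) = -2 * \<epsilon>^2 * card I"
    using finI Ine by (simp add: power2_eq_square field_simps)
  finally show ?thesis using mu unfolding P_def[symmetric] xv_def by simp
qed

lemma finite_support_Pi: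
  assumes "finite V"
  shows "finite (set_pmf (Pi_pmf V False (\<lambda>_. bernoulli_pmf q)))"
proof -
  have "set_pmf (Pi_pmf V False (\<lambda>_. bernoulli_pmf q)) \<subseteq> PiE_dflt V False (set_pmf \<circ> (\<lambda>_. bernoulli_pmf q))"
    by (rule set_Pi_pmf_subset'[OF assms])
  moreover have "finite (PiE_dflt V False (set_pmf \<circ> (\<lambda>_. bernoulli_pmf q)))"
    by (rule finite_PiE_dflt) (use assms in \<open>auto intro: finite_subset[of _ UNIV]\<close>)
  ultimately show ?thesis by (rule finite_subset)
qed

lemma exists_good:
  fixes V :: "'a set" and N :: "'a \<Rightarrow> 'a set" and \<epsilon> :: real
  assumes fin: "finite V" and NV: "\<And>w. w \<in> V \<Longrightarrow> w \<in> N w \<and> N w \<subseteq> V"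
    and e0: "0 \<le> \<epsilon>" and e1: "\<epsilon> \<le> 1/2"
  shows "\<exists>\<omega>. real_of_int (\<Sum>u\<in>V. xi (\<omega> u)) + (\<Sum>w\<in>V. if (\<Sum>i\<in>N w. xi (\<omega> i)) \<le> 0 then 2 * real (card (N w)) else 0)
     \<le> 2*\<epsilon>*card V + (\<Sum>w\<in>V. 2 * real (card (N w)) * exp (-2 * \<epsilon>^2 * card (N w)))"
proof -
  define P where "P = Pi_pmf V False (\<lambda>_. bernoulli_pmf (1/2+\<epsilon>))"
  define B where "B w = {\<omega>. (\<Sum>i\<in>N w. real_of_int (xi (\<omega> i))) \<le> 0}" for w
  define h where "h \<omega> = (\<Sum>u\<in>V. real_of_int (xi (\<omega> u))) + (\<Sum>w\<in>V. 2 * real (card (N w)) * indicator (B w) \<omega>)" for \<omega>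
  have finP: "finite (set_pmf P)" unfolding P_def by (rule finite_support_Pi[OF fin])
  have int: "integrable (measure_pmf P) f" for f :: "_ \<Rightarrow> real"
    by (rule integrable_measure_pmf_finite[OF finP])
  have ex: "measure_pmf.expectation P (\<lambda>f. real_of_int (xi (f i))) = 2*\<epsilon>" if "i \<in> V" for i
  proof -
    have mp: "map_pmf (\<lambda>f. f i) P = bernoulli_pmf (1/2+\<epsilon>)"
      unfolding P_def by (subst Pi_pmf_component) (use fin that in auto)
    have "measure_pmf.expectation P (\<lambda>f. real_of_int (xi (f i))) = measure_pmf.expectation (bernoulli_pmf (1/2+\<epsilon>)) (\<lambda>b. real_of_int (xi b))"
      by (simp add: mp[symmetric])
    also have "\<dots> = 2*\<epsilon>" using e0 e1 by (simp add: xi_def)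
    finally show ?thesis .
  qed
  have pb: "measure_pmf.prob P (B w) \<le> exp (-2 * \<epsilon>^2 * card (N w))" if "w \<in> V" for w
    unfolding P_def B_def by (rule prob_bad) (use fin NV[OF that] e0 e1 in auto)
  have Eh: "measure_pmf.expectation P h = 2*\<epsilon>*card V + (\<Sum>w\<in>V. 2 * real (card (N w)) * measure_pmf.prob P (B w))"
    unfolding h_def
    by (simp add: Bochner_Integration.integral_add Bochner_Integration.integral_sum int ex
        measure_pmf.emeasure_eq_measure)
  also have "\<dots> \<le> 2*\<epsilon>*card V + (\<Sum>w\<in>V. 2 * real (card (N w)) * exp (-2 * \<epsilon>^2 * card (N w)))"
    by (intro add_left_mono sum_mono mult_left_mono pb) auto
  finally have Eh': "measure_pmf.expectation P h \<le> 2*\<epsilon>*card V + (\<Sum>w\<in>V. 2 * real (card (N w)) * exp (-2 * \<epsilon>^2 * card (N w)))" .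
  have "\<exists>\<omega>. h \<omega> \<le> measure_pmf.expectation P h"
  proof (rule ccontr)
    assume "\<not> ?thesis"
    hence "\<forall>\<omega>. measure_pmf.expectation P h < h \<omega>" by (auto simp: not_le)
    hence "measure_pmf.expectation P (\<lambda>_. measure_pmf.expectation P h) < measure_pmf.expectation P h"
      by (intro measure_pmf.integral_less_AE_space int) auto
    thus False by simp
  qed
  then obtain \<omega> where om: "h \<omega> \<le> measure_pmf.expectation P h" by blast
  have eq: "real_of_int (\<Sum>u\<in>V. xi (\<omega> u)) + (\<Sum>w\<in>V. if (\<Sum>i\<in>N w. xi (\<omega> i)) \<le> 0 then 2 * real (card (N w)) else 0) = h \<omega>"
    unfolding h_def B_def by (auto intro!: sum.cong simp: indicator_def simp flip: of_int_sum)
  have "real_of_int (\<Sum>u\<in>V. xi (\<omega> u)) + (\<Sum>w\<in>V. if (\<Sum>i\<in>N w. xi (\<omega> i)) \<le> 0 then 2 * real (card (N w)) else 0)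
     \<le> 2*\<epsilon>*card V + (\<Sum>w\<in>V. 2 * real (card (N w)) * exp (-2 * \<epsilon>^2 * card (N w)))"
    unfolding eq using om Eh' by (rule order_trans)
  thus ?thesis by blast
qed



lemma num_b:
  fixes D m :: real
  assumes D: "D \<ge> 3" and m: "m \<ge> D"
  shows "m * exp (-(3 * ln D / D) * m) \<le> 1 / D^2"
proof -
  define t where "t = m / D"
  have Dp: "D > 0" using D by simp
  have t1: "t \<ge> 1" using m Dp by (simp add: t_def)
  have mt: "m = D * t" using Dp by (simp add: t_def)
  have lnD: "ln D \<ge> 1"
  proof -
    have "exp 1 \<le> D" using exp_le D by linarith
    thus ?thesis using Dp by (metis ln_exp ln_le_cancel_iff exp_gt_zero)
  qed
  define a where "a = 3 * ln D * (t - 1)"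
  have a0: "a \<ge> 0" using t1 lnD by (simp add: a_def)
  have ta: "t \<le> exp a"
  proof -
    have "t - 1 \<le> a" unfolding a_def using mult_right_mono[of 1 "3 * ln D" "t - 1"] t1 lnD by simp
    hence "t \<le> 1 + a" by linarith
    also have "\<dots> \<le> exp a" by (rule exp_ge_add_one_self)
    finally show ?thesis .
  qed
  have e: "-(3 * ln D / D) * m = -(3 * ln D) + - a"
    using Dp by (simp add: mt a_def field_simps)
  have e3: "exp (-(3 * ln D)) = 1 / D^3"
  proof -
    have "exp (-(3 * ln D)) = inverse (exp (ln D) ^ 3)"
      by (simp add: exp_minus exp_of_nat_mult[symmetric])
    thus ?thesis using Dp by (simp add: divide_inverse)
  qed
  have "m * exp (-(3 * ln D / D) * m) = m * (exp (-(3 * ln D)) * exp (-a))"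
    by (simp only: e exp_add)
  also have "\<dots> = D * (t * exp (-a)) / D^3"
    unfolding e3 mt by simp
  also have "t * exp (-a) \<le> 1"
    using ta by (simp add: exp_minus field_simps)
  hence "D * (t * exp (-a)) / D^3 \<le> D * 1 / D^3"
    using Dp by (intro divide_right_mono mult_left_mono) auto
  also have "D * 1 / D^3 = 1 / D^2" using Dp by (simp add: power3_eq_cube power2_eq_square)
  finally show ?thesis .
qed



definition gfun :: "'a set \<Rightarrow> ('a \<Rightarrow> 'a set) \<Rightarrow> ('a \<Rightarrow> bool) \<Rightarrow> 'a \<Rightarrow> int" where
  "gfun V N \<omega> u = (if \<exists>w\<in>V. (\<Sum>i\<in>N w. xi (\<omega> i)) \<le> 0 \<and> u \<in> N w then 1 else xi (\<omega> u))"

lemma xi_le1: "xi b \<le> 1" by (simp add: xi_def)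

lemma gfun_ge: "xi (\<omega> u) \<le> gfun V N \<omega> u"
  by (simp add: gfun_def xi_le1)

lemma gfun_closed:
  assumes fin: "finite V" and NV: "\<And>w. w \<in> V \<Longrightarrow> w \<in> N w \<and> N w \<subseteq> V" and v: "v \<in> V"
  shows "(\<Sum>x\<in>N v. gfun V N \<omega> x) \<ge> 1"
proof (cases "(\<Sum>i\<in>N v. xi (\<omega> i)) \<le> 0")
  case True
  have finN: "finite (N v)" using NV[OF v] fin finite_subset by blast
  have "(\<Sum>x\<in>N v. gfun V N \<omega> x) = (\<Sum>x\<in>N v. 1)"
    by (rule sum.cong) (use True v in \<open>auto simp: gfun_def\<close>)
  also have "\<dots> = int (card (N v))" by simp
  finally have eq: "(\<Sum>x\<in>N v. gfun V N \<omega> x) = int (card (N v))" .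
  have "card (N v) \<ge> 1" using NV[OF v] finN
    by (metis One_nat_def Suc_leI card_gt_0_iff empty_iff)
  thus ?thesis using eq by simp
next
  case False
  have "(\<Sum>i\<in>N v. xi (\<omega> i)) \<le> (\<Sum>x\<in>N v. gfun V N \<omega> x)"
    by (rule sum_mono) (rule gfun_ge)
  thus ?thesis using False by simp
qed

lemma gfun_weight:
  assumes fin: "finite V" and NV: "\<And>w. w \<in> V \<Longrightarrow> w \<in> N w \<and> N w \<subseteq> V"
  shows "(\<Sum>u\<in>V. gfun V N \<omega> u) \<le> (\<Sum>u\<in>V. xi (\<omega> u))
          + (\<Sum>w\<in>V. if (\<Sum>i\<in>N w. xi (\<omega> i)) \<le> 0 then 2 * int (card (N w)) else 0)"
proof -
  define bad where "bad w = ((\<Sum>i\<in>N w. xi (\<omega> i)) \<le> 0)" for w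
  have pt: "gfun V N \<omega> u \<le> xi (\<omega> u) + 2 * (\<Sum>w\<in>V. if bad w \<and> u \<in> N w then 1 else 0)" for u
  proof (cases "\<exists>w\<in>V. bad w \<and> u \<in> N w")
    case True
    then obtain w where w: "w \<in> V" "bad w \<and> u \<in> N w" by blast
    have "(1::int) \<le> (\<Sum>w\<in>V. if bad w \<and> u \<in> N w then 1 else 0)"
      using member_le_sum[of w V "\<lambda>w. if bad w \<and> u \<in> N w then (1::int) else 0"] w fin by auto
    moreover have "gfun V N \<omega> u \<le> 1" by (simp add: gfun_def xi_le1)
    moreover have "xi (\<omega> u) \<ge> -1" by (simp add: xi_def)
    ultimately show ?thesis by linarith
  next
    case False
    hence "gfun V N \<omega> u = xi (\<omega> u)" by (auto simp: gfun_def bad_def)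
    moreover have "(\<Sum>w\<in>V. if bad w \<and> u \<in> N w then 1 else 0) \<ge> (0::int)"
      by (rule sum_nonneg) auto
    ultimately show ?thesis by linarith
  qed
  have "(\<Sum>u\<in>V. gfun V N \<omega> u) \<le> (\<Sum>u\<in>V. xi (\<omega> u) + 2 * (\<Sum>w\<in>V. if bad w \<and> u \<in> N w then 1 else 0))"
    by (rule sum_mono) (rule pt)
  also have "\<dots> = (\<Sum>u\<in>V. xi (\<omega> u)) + 2 * (\<Sum>u\<in>V. \<Sum>w\<in>V. if bad w \<and> u \<in> N w then 1 else 0)"
    by (simp only: sum.distrib sum_distrib_left)
  also have "(\<Sum>u\<in>V. \<Sum>w\<in>V. if bad w \<and> u \<in> N w then 1 else (0::int)) = (\<Sum>w\<in>V. \<Sum>u\<in>V. if bad w \<and> u \<in> N w then 1 else 0)"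
    by (rule sum.swap)
  also have "(\<Sum>w\<in>V. \<Sum>u\<in>V. if bad w \<and> u \<in> N w then 1 else (0::int)) = (\<Sum>w\<in>V. if bad w then int (card (N w)) else 0)"
  proof (rule sum.cong)
    fix w assume w: "w \<in> V"
    have "(\<Sum>u\<in>V. if u \<in> N w then 1 else (0::int)) = (\<Sum>u\<in>{x\<in>V. x \<in> N w}. 1)"
      using sum.inter_filter[OF fin, of "\<lambda>_. (1::int)" "\<lambda>x. x \<in> N w"] by simp
    also have "{x\<in>V. x \<in> N w} = N w" using NV[OF w] by auto
    finally have c: "(\<Sum>u\<in>V. if u \<in> N w then 1 else (0::int)) = int (card (N w))" by simp
    show "(\<Sum>u\<in>V. if bad w \<and> u \<in> N w then 1 else (0::int)) = (if bad w then int (card (N w)) else 0)"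
      using c by (cases "bad w") simp_all
  qed simp
  also have "2 * (\<Sum>w\<in>V. if bad w then int (card (N w)) else 0) = (\<Sum>w\<in>V. if bad w then 2 * int (card (N w)) else 0)"
    by (auto simp: sum_distrib_left intro!: sum.cong)
  finally show ?thesis by (simp add: bad_def)
qed



theorem theorem5:
  fixes V :: "'a set" and E :: "'a \<Rightarrow> 'a \<Rightarrow> bool"
  assumes "simple_graph V E" and "V \<noteq> {}"
    and "min_degree V E \<ge> 10^6"
  shows "real_of_int (signed_dom_number V E)
     \<le> (sqrt (6 * ln (real (min_degree V E) + 1)) + 1.21)
         / sqrt (real (min_degree V E) + 1) * real (card V)"
proof -
  have fin: "finite V" and sym: "\<And>u v. E u v \<Longrightarrow> E v u" and irr: "\<And>v. \<not> E v v"
    using assms(1) unfolding simple_graph_def by auto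
  define N where "N = closed_nbhd V E"
  define \<delta> where "\<delta> = min_degree V E"
  define D where "D = real \<delta> + 1"
  have D6: "D \<ge> 10^6 + 1" using assms(3) by (simp add: D_def \<delta>_def)
  have Dp: "D > 0" using D6 by simp
  have NV: "w \<in> N w \<and> N w \<subseteq> V" if "w \<in> V" for w
    using that by (auto simp: N_def closed_nbhd_def neighbours_def)
  have cardN: "real (card (N w)) \<ge> D" if w: "w \<in> V" for w
  proof -
    have fn: "finite (neighbours V E w)" using fin by (simp add: neighbours_def)
    have "w \<notin> neighbours V E w" using irr by (simp add: neighbours_def)
    hence "card (N w) = Defs.degree V E w + 1"
      using fn by (simp add: N_def closed_nbhd_def Defs.degree_def)
    moreover have "\<delta> \<le> Defs.degree V E w"
      unfolding \<delta>_def min_degree_def using fin w by (intro Min_le) auto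
    ultimately show ?thesis by (simp add: D_def)
  qed
  define L where "L = ln D"
  have L1: "L \<ge> 1"
  proof -
    have "(3::real) \<le> D" using D6 by simp
    hence "exp 1 \<le> D" using exp_le by linarith
    thus ?thesis using Dp unfolding L_def by (metis ln_exp ln_le_cancel_iff exp_gt_zero)
  qed
  define \<epsilon> where "\<epsilon> = sqrt (6 * L) / (2 * sqrt D)"
  have sDp: "sqrt D > 0" using Dp by simp
  have e0: "\<epsilon> \<ge> 0" unfolding \<epsilon>_def using L1 sDp by (intro divide_nonneg_nonneg) auto
  have LD: "6 * L \<le> D"
  proof -
    have sD: "sqrt D \<ge> 12"
    proof -
      have "sqrt 144 \<le> sqrt D" using D6 by (intro real_sqrt_le_mono) simp
      moreover have "sqrt (144::real) = 12" by (simp add: real_sqrt_unique)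
      ultimately show ?thesis by simp
    qed
    have "L = 2 * ln (sqrt D)" unfolding L_def using Dp by (simp add: ln_sqrt)
    also have "ln (sqrt D) \<le> sqrt D - 1" using Dp by (intro ln_le_minus_one) simp
    finally have "L \<le> 2 * sqrt D" by simp
    hence "6 * L \<le> 12 * sqrt D" by simp
    also have "\<dots> \<le> sqrt D * sqrt D" using sD Dp by (intro mult_right_mono) auto
    also have "\<dots> = D" using Dp by (simp add: real_sqrt_mult_self)
    finally show ?thesis .
  qed
  have e1: "\<epsilon> \<le> 1/2"
  proof -
    have "sqrt (6 * L) \<le> sqrt D" using LD by (rule real_sqrt_le_mono)
    thus ?thesis using sDp unfolding \<epsilon>_def by (simp add: divide_simps)
  qed
  have e2: "2 * \<epsilon>^2 = 3 * L / D"
  proof -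
    have "\<epsilon>^2 = (sqrt (6 * L))^2 / (4 * (sqrt D)^2)"
      by (simp add: \<epsilon>_def power_divide power_mult_distrib)
    also have "\<dots> = 6 * L / (4 * D)" using L1 Dp by simp
    finally show ?thesis using Dp by (simp add: field_simps)
  qed
  obtain \<omega> where om:
    "real_of_int (\<Sum>u\<in>V. xi (\<omega> u)) + (\<Sum>w\<in>V. if (\<Sum>i\<in>N w. xi (\<omega> i)) \<le> 0 then 2 * real (card (N w)) else 0)
     \<le> 2*\<epsilon>*card V + (\<Sum>w\<in>V. 2 * real (card (N w)) * exp (-2 * \<epsilon>^2 * card (N w)))"
    using exists_good[OF fin NV e0 e1] by blast
  have tm: "2 * real (card (N w)) * exp (-2 * \<epsilon>^2 * card (N w)) \<le> 2 / D^2" if w: "w \<in> V" for w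
  proof -
    have "real (card (N w)) * exp (-(3 * ln D / D) * real (card (N w))) \<le> 1 / D^2"
      by (rule num_b) (use D6 cardN[OF w] in auto)
    moreover have "-2 * \<epsilon>^2 * real (card (N w)) = -(3 * ln D / D) * real (card (N w))"
      using e2 by (simp add: L_def)
    ultimately show ?thesis by simp
  qed
  have sumtm: "(\<Sum>w\<in>V. 2 * real (card (N w)) * exp (-2 * \<epsilon>^2 * card (N w))) \<le> real (card V) * (2 / D^2)"
    using sum_mono[of V _ "\<lambda>_. 2 / D^2", OF tm] by simp
  define g where "g = gfun V N \<omega>"
  have sdf: "signed_dom_fun V E g"
    unfolding signed_dom_fun_def
  proof (intro conjI ballI)
    fix v assume "v \<in> V"
    show "g v \<in> {-1, 1}" by (simp add: g_def gfun_def xi_def)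
  next
    fix v assume v: "v \<in> V"
    show "1 \<le> (\<Sum>x\<in>closed_nbhd V E v. g x)"
      using gfun_closed[OF fin NV v] unfolding g_def N_def by simp
  qed
  have wt: "(\<Sum>u\<in>V. g u) \<le> (\<Sum>u\<in>V. xi (\<omega> u))
          + (\<Sum>w\<in>V. if (\<Sum>i\<in>N w. xi (\<omega> i)) \<le> 0 then 2 * int (card (N w)) else 0)"
    unfolding g_def by (rule gfun_weight[OF fin NV])
  have fS: "finite {(\<Sum>v\<in>V. f v) | f. signed_dom_fun V E f}"
  proof (rule finite_subset[of _ "{- int (card V) .. int (card V)}"])
    show "{(\<Sum>v\<in>V. f v) | f. signed_dom_fun V E f} \<subseteq> {- int (card V) .. int (card V)}"
    proof
      fix s assume "s \<in> {(\<Sum>v\<in>V. f v) | f. signed_dom_fun V E f}"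
      then obtain f where s: "s = (\<Sum>v\<in>V. f v)" and f: "signed_dom_fun V E f" by blast
      have b: "f v \<in> {-1, 1}" if "v \<in> V" for v using f that by (auto simp: signed_dom_fun_def)
      have "(\<Sum>v\<in>V. f v) \<le> (\<Sum>v\<in>V. 1)" by (rule sum_mono) (use b in force)
      moreover have "(\<Sum>v\<in>V. -1) \<le> (\<Sum>v\<in>V. f v)" by (rule sum_mono) (use b in force)
      ultimately show "s \<in> {- int (card V) .. int (card V)}" using s by simp
    qed
  qed simp
  have sdn: "signed_dom_number V E \<le> (\<Sum>u\<in>V. g u)"
    unfolding signed_dom_number_def by (rule Min_le[OF fS]) (use sdf in blast)
  have "real_of_int (signed_dom_number V E) \<le> real_of_int (\<Sum>u\<in>V. g u)"
    using sdn by (simp only: of_int_le_iff)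
  also have "\<dots> \<le> real_of_int (\<Sum>u\<in>V. xi (\<omega> u)) + (\<Sum>w\<in>V. if (\<Sum>i\<in>N w. xi (\<omega> i)) \<le> 0 then 2 * real (card (N w)) else 0)"
  proof -
    have "real_of_int (\<Sum>u\<in>V. g u) \<le> real_of_int ((\<Sum>u\<in>V. xi (\<omega> u))
          + (\<Sum>w\<in>V. if (\<Sum>i\<in>N w. xi (\<omega> i)) \<le> 0 then 2 * int (card (N w)) else 0))"
      using wt by (simp only: of_int_le_iff)
    also have "\<dots> = real_of_int (\<Sum>u\<in>V. xi (\<omega> u)) + (\<Sum>w\<in>V. if (\<Sum>i\<in>N w. xi (\<omega> i)) \<le> 0 then 2 * real (card (N w)) else 0)"
      by (simp add: of_int_sum of_int_add, intro sum.cong) auto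
    finally show ?thesis .
  qed
  also have "\<dots> \<le> 2*\<epsilon>*card V + real (card V) * (2 / D^2)"
    using om sumtm by linarith
  also have "\<dots> \<le> (sqrt (6 * L) + 1.21) / sqrt D * real (card V)"
  proof -
    have "2 * \<epsilon> = sqrt (6 * L) / sqrt D" by (simp add: \<epsilon>_def)
    moreover have "2 / D^2 \<le> 1.21 / sqrt D"
    proof -
      have s1: "1 \<le> sqrt D" using D6 by simp
      have "sqrt D * 1 \<le> sqrt D * sqrt D" using s1 sDp by (intro mult_left_mono) auto
      hence sDD: "sqrt D \<le> D" using Dp by (simp add: real_sqrt_mult_self)
      have "2 * sqrt D \<le> 1.21 * D^2"
      proof -
        have "2 * sqrt D \<le> 2 * D" using sDD by simp
        also have "\<dots> \<le> 1.21 * D * D" using D6 by (intro mult_right_mono) auto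
        finally show ?thesis by (simp add: power2_eq_square)
      qed
      moreover have "sqrt D > 0" using Dp by simp
      ultimately show ?thesis using Dp by (simp add: field_simps)
    qed
    ultimately have "2*\<epsilon> + 2 / D^2 \<le> (sqrt (6 * L) + 1.21) / sqrt D"
      by (simp add: add_divide_distrib)
    hence "(2*\<epsilon> + 2 / D^2) * real (card V) \<le> (sqrt (6 * L) + 1.21) / sqrt D * real (card V)"
      by (rule mult_right_mono) simp
    moreover have "2*\<epsilon>*card V + real (card V) * (2 / D^2) = (2*\<epsilon> + 2 / D^2) * real (card V)"
      by (simp add: algebra_simps)
    ultimately show ?thesis by linarith
  qed
  finally show ?thesis by (simp add: L_def D_def \<delta>_def)
qed


end
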